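(* Let $M$ be a simple binary matroid of rank $r+1$. Then $\operatorname{si}(M/e)\cong PG(r-1,2)$ for all $e\in E(M)$ if and only if $M$ is isomorphic to the matroid obtained from $PG(r,2)$ by deleting the elements of a rank-$(r-i)$ flat, for some $i\in\{0,1,\dots,r\}$.
   Context: $\operatorname{si}$ denotes simplification. $PG(r,2)$ is the binary projective geometry of rank $r+1$; the matroid obtained by deleting a rank-$(r-i)$ flat from it does not depend on the choice of that flat (the rank-$0$ flat is empty). *)

theory Defs
  imports Main
begin

type_synonym 'a matroid = "'a set \<times> ('a set \<Rightarrow> bool)"

definition ground :: "'a matroid \<Rightarrow> 'a set" where
  "ground M = fst M"

definition indep :: "'a matroid \<Rightarrow> 'a set \<Rightarrow> bool" where
  "indep M = snd M"

definition matroid :: "'a matroid \<Rightarrow> bool" where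
  "matroid M \<longleftrightarrow>
     finite (ground M) \<and>
     indep M {} \<and>
     (\<forall>X. indep M X \<longrightarrow> X \<subseteq> ground M) \<and>
     (\<forall>X Y. indep M X \<and> Y \<subseteq> X \<longrightarrow> indep M Y) \<and>
     (\<forall>X Y. indep M X \<and> indep M Y \<and> card X < card Y \<longrightarrow>
        (\<exists>y\<in>Y - X. indep M (insert y X)))"

definition rk :: "'a matroid \<Rightarrow> 'a set \<Rightarrow> nat" where
  "rk M X = Max {card Y | Y. Y \<subseteq> X \<and> indep M Y}"

definition rank :: "'a matroid \<Rightarrow> nat" where
  "rank M = rk M (ground M)"

definition flat :: "'a matroid \<Rightarrow> 'a set \<Rightarrow> bool" where
  "flat M F \<longleftrightarrow> F \<subseteq> ground M \<and> (\<forall>x \<in> ground M - F. rk M (insert x F) > rk M F)"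

definition loop :: "'a matroid \<Rightarrow> 'a \<Rightarrow> bool" where
  "loop M x \<longleftrightarrow> x \<in> ground M \<and> \<not> indep M {x}"

definition simple :: "'a matroid \<Rightarrow> bool" where
  "simple M \<longleftrightarrow> (\<forall>x\<in>ground M. \<forall>y\<in>ground M. indep M {x, y})"

definition restrict :: "'a matroid \<Rightarrow> 'a set \<Rightarrow> 'a matroid" where
  "restrict M S = (S \<inter> ground M, \<lambda>X. X \<subseteq> S \<and> indep M X)"

definition delete :: "'a matroid \<Rightarrow> 'a set \<Rightarrow> 'a matroid" where
  "delete M F = restrict M (ground M - F)"

definition contract :: "'a matroid \<Rightarrow> 'a \<Rightarrow> 'a matroid" where
  "contract M e = (ground M - {e},
     \<lambda>X. e \<notin> X \<and> (if loop M e then indep M X else indep M (insert e X)))"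

text \<open>S is the ground set of a simplification of N: S consists of non-loops and
  contains exactly one element of each parallel class of N.\<close>
definition parallel :: "'a matroid \<Rightarrow> 'a \<Rightarrow> 'a \<Rightarrow> bool" where
  "parallel N x y \<longleftrightarrow> x \<in> ground N \<and> y \<in> ground N \<and> \<not> loop N x \<and> \<not> loop N y \<and>
     \<not> indep N {x, y}"

definition is_simplification :: "'a matroid \<Rightarrow> 'a set \<Rightarrow> bool" where
  "is_simplification N S \<longleftrightarrow> S \<subseteq> ground N \<and> (\<forall>s\<in>S. \<not> loop N s) \<and>
     (\<forall>x\<in>ground N. \<not> loop N x \<longrightarrow> (\<exists>!s. s \<in> S \<and> (s = x \<or> parallel N s x)))"

definition iso :: "'a matroid \<Rightarrow> 'b matroid \<Rightarrow> bool" where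
  "iso M N \<longleftrightarrow> (\<exists>f. bij_betw f (ground M) (ground N) \<and>
     (\<forall>X. X \<subseteq> ground M \<longrightarrow> (indep M X \<longleftrightarrow> indep N (f ` X))))"

text \<open>Vectors over GF(2) are encoded as sets of natural numbers (their supports);
  the sum of a finite family is the coordinatewise parity.\<close>
definition gf2_sum :: "('a \<Rightarrow> nat set) \<Rightarrow> 'a set \<Rightarrow> nat set" where
  "gf2_sum \<phi> Y = {n. odd (card {y \<in> Y. n \<in> \<phi> y})}"

definition gf2_indep :: "('a \<Rightarrow> nat set) \<Rightarrow> 'a set \<Rightarrow> bool" where
  "gf2_indep \<phi> X \<longleftrightarrow> finite X \<and> inj_on \<phi> X \<and>
     (\<forall>Y. Y \<subseteq> X \<and> Y \<noteq> {} \<longrightarrow> gf2_sum \<phi> Y \<noteq> {})"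

definition binary :: "'a matroid \<Rightarrow> bool" where
  "binary M \<longleftrightarrow> (\<exists>\<phi> :: 'a \<Rightarrow> nat set.
     \<forall>X. X \<subseteq> ground M \<longrightarrow> (indep M X \<longleftrightarrow> gf2_indep \<phi> X))"

text \<open>PG_rank k is the binary projective geometry of rank k, i.e. PG(k-1,2):
  the nonzero vectors of GF(2)^k with linear independence.\<close>
definition PG_rank :: "nat \<Rightarrow> nat set matroid" where
  "PG_rank k = ({v. v \<subseteq> {..<k} \<and> v \<noteq> {}},
     \<lambda>X. X \<subseteq> {v. v \<subseteq> {..<k} \<and> v \<noteq> {}} \<and> gf2_indep id X)"

end

theory Submission
  imports Defs
begin

definition xr :: "'b set \<Rightarrow> 'b set \<Rightarrow> 'b set" where
  "xr a b = (a - b) \<union> (b - a)"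

lemma xr_self[simp]: "xr a a = {}" by (auto simp: xr_def)
lemma xr_empty[simp]: "xr a {} = a" "xr {} a = a" by (auto simp: xr_def)
lemma xr_comm: "xr a b = xr b a" by (auto simp: xr_def)
lemma xr_assoc: "xr (xr a b) c = xr a (xr b c)" by (auto simp: xr_def)
lemma xr_eq_empty[simp]: "xr a b = {} \<longleftrightarrow> a = b" by (auto simp: xr_def)
lemma xr_cancel1[simp]: "xr a (xr a b) = b" by (auto simp: xr_def)
lemma xr_cancel2[simp]: "xr (xr a b) b = a" by (auto simp: xr_def)
lemma xr_cancel3[simp]: "xr (xr a b) a = b" by (auto simp: xr_def)
lemma xr_cancel4[simp]: "xr b (xr a b) = a" by (auto simp: xr_def)
lemma xr_subset: "a \<subseteq> K \<Longrightarrow> b \<subseteq> K \<Longrightarrow> xr a b \<subseteq> K" by (auto simp: xr_def)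
lemma xr_eq_iff: "xr a b = c \<longleftrightarrow> b = xr a c" by (auto simp: xr_def)
lemma finite_xr: "finite a \<Longrightarrow> finite b \<Longrightarrow> finite (xr a b)" by (auto simp: xr_def)

lemma gf2_sum_empty[simp]: "gf2_sum \<phi> {} = {}"
  by (simp add: gf2_sum_def)

lemma gf2_sum_insert:
  assumes "finite Y" "y \<notin> Y"
  shows "gf2_sum \<phi> (insert y Y) = xr (\<phi> y) (gf2_sum \<phi> Y)"
proof -
  have "\<And>n. card {z \<in> insert y Y. n \<in> \<phi> z} = card {z \<in> Y. n \<in> \<phi> z} + (if n \<in> \<phi> y then 1 else 0)"
  proof -
    fix n
    show "card {z \<in> insert y Y. n \<in> \<phi> z} = card {z \<in> Y. n \<in> \<phi> z} + (if n \<in> \<phi> y then 1 else 0)"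
    proof (cases "n \<in> \<phi> y")
      case True
      then have "{z \<in> insert y Y. n \<in> \<phi> z} = insert y {z \<in> Y. n \<in> \<phi> z}" by auto
      then show ?thesis using True assms by simp
    next
      case False
      then have "{z \<in> insert y Y. n \<in> \<phi> z} = {z \<in> Y. n \<in> \<phi> z}" by auto
      then show ?thesis using False by simp
    qed
  qed
  then show ?thesis by (auto simp: gf2_sum_def xr_def)
qed

lemma gf2_sum_single[simp]: "gf2_sum \<phi> {y} = \<phi> y"
  using gf2_sum_insert[of "{}" y \<phi>] by simp

lemma gf2_sum_pair: "x \<noteq> y \<Longrightarrow> gf2_sum \<phi> {x, y} = xr (\<phi> x) (\<phi> y)"
  using gf2_sum_insert[of "{y}" x \<phi>] by simp

lemma gf2_sum_cong: "(\<And>y. y \<in> Y \<Longrightarrow> \<phi> y = \<phi>' y) \<Longrightarrow> gf2_sum \<phi> Y = gf2_sum \<phi>' Y"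
proof -
  assume h: "\<And>y. y \<in> Y \<Longrightarrow> \<phi> y = \<phi>' y"
  have "\<And>n. {y \<in> Y. n \<in> \<phi> y} = {y \<in> Y. n \<in> \<phi>' y}" using h by auto
  then show ?thesis by (simp add: gf2_sum_def)
qed

lemma gf2_sum_reindex:
  assumes "inj_on \<psi> Y"
  shows "gf2_sum \<phi> (\<psi> ` Y) = gf2_sum (\<lambda>y. \<phi> (\<psi> y)) Y"
proof -
  have "\<And>n. {v \<in> \<psi> ` Y. n \<in> \<phi> v} = \<psi> ` {y \<in> Y. n \<in> \<phi> (\<psi> y)}" by auto
  moreover have "\<And>n. inj_on \<psi> {y \<in> Y. n \<in> \<phi> (\<psi> y)}" using assms by (auto intro: inj_on_subset)
  ultimately have "\<And>n. card {v \<in> \<psi> ` Y. n \<in> \<phi> v} = card {y \<in> Y. n \<in> \<phi> (\<psi> y)}"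
    by (simp add: card_image)
  then show ?thesis by (simp add: gf2_sum_def)
qed

lemma card_xr_parity:
  assumes "finite A" "finite B"
  shows "odd (card (xr A B)) \<longleftrightarrow> (odd (card A) \<noteq> odd (card B))"
proof -
  have u: "card (A \<union> B) + card (A \<inter> B) = card A + card B" using card_Un_Int assms by metis
  have "xr A B = (A \<union> B) - (A \<inter> B)" by (auto simp: xr_def)
  then have "card (xr A B) = card (A \<union> B) - card (A \<inter> B)"
    using assms by (simp only:) (intro card_Diff_subset, auto)
  moreover have "card (A \<inter> B) \<le> card (A \<union> B)" using assms by (intro card_mono) auto
  ultimately have "card (xr A B) + 2 * card (A \<inter> B) = card A + card B" using u by linarith
  then show ?thesis by (metis even_add even_mult_iff even_numeral)
qed

lemma gf2_sum_xr:
  assumes "finite A" "finite B"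
  shows "gf2_sum \<phi> (xr A B) = xr (gf2_sum \<phi> A) (gf2_sum \<phi> B)"
proof -
  have "\<And>n. {y \<in> xr A B. n \<in> \<phi> y} = xr {y \<in> A. n \<in> \<phi> y} {y \<in> B. n \<in> \<phi> y}"
    by (auto simp: xr_def)
  moreover have "\<And>n. odd (card (xr {y \<in> A. n \<in> \<phi> y} {y \<in> B. n \<in> \<phi> y})) \<longleftrightarrow>
      (odd (card {y \<in> A. n \<in> \<phi> y}) \<noteq> odd (card {y \<in> B. n \<in> \<phi> y}))"
    using assms by (intro card_xr_parity) auto
  ultimately have "\<And>n. odd (card {y \<in> xr A B. n \<in> \<phi> y}) \<longleftrightarrow>
      (odd (card {y \<in> A. n \<in> \<phi> y}) \<noteq> odd (card {y \<in> B. n \<in> \<phi> y}))"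
    by simp
  then show ?thesis by (auto simp: gf2_sum_def xr_def)
qed

definition additive :: "(nat set \<Rightarrow> nat set) \<Rightarrow> bool" where
  "additive h \<longleftrightarrow> (\<forall>a b. h (xr a b) = xr (h a) (h b))"

lemma additive_empty: "additive h \<Longrightarrow> h {} = {}"
  unfolding additive_def by (metis xr_self)

lemma gf2_sum_additive:
  assumes "additive h" "finite Y"
  shows "gf2_sum (\<lambda>y. h (\<phi> y)) Y = h (gf2_sum \<phi> Y)"
  using assms(2)
proof (induction Y rule: finite_induct)
  case empty then show ?case using additive_empty[OF assms(1)] by simp
next
  case (insert y Y)
  then show ?case using assms(1) by (simp add: gf2_sum_insert additive_def)
qed

lemma gf2_sum_subset: "gf2_sum id Z \<subseteq> \<Union> Z"
proof
  fix n assume "n \<in> gf2_sum id Z"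
  then have "card {y \<in> Z. n \<in> y} \<noteq> 0" unfolding gf2_sum_def by (intro notI) simp
  then have "{y \<in> Z. n \<in> y} \<noteq> {}" by (metis card.empty)
  then show "n \<in> \<Union> Z" by auto
qed

lemma gf2_sum_subset': "(\<And>y. y \<in> Y \<Longrightarrow> \<phi> y \<subseteq> K) \<Longrightarrow> gf2_sum \<phi> Y \<subseteq> K"
proof
  fix n assume h: "\<And>y. y \<in> Y \<Longrightarrow> \<phi> y \<subseteq> K" and "n \<in> gf2_sum \<phi> Y"
  then have "card {y \<in> Y. n \<in> \<phi> y} \<noteq> 0" unfolding gf2_sum_def by (intro notI) simp
  then have "{y \<in> Y. n \<in> \<phi> y} \<noteq> {}" by (metis card.empty)
  then show "n \<in> K" using h by auto
qed


lemma gf2_indep_sumD: "gf2_indep \<phi> X \<Longrightarrow> Y \<subseteq> X \<Longrightarrow> Y \<noteq> {} \<Longrightarrow> gf2_sum \<phi> Y \<noteq> {}"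
  unfolding gf2_indep_def by blast

lemma gf2_indep_finite: "gf2_indep \<phi> X \<Longrightarrow> finite X"
  unfolding gf2_indep_def by blast

lemma gf2_indep_inj: "gf2_indep \<phi> X \<Longrightarrow> inj_on \<phi> X"
  unfolding gf2_indep_def by blast

lemma gf2_indepI: "finite X \<Longrightarrow> inj_on \<phi> X \<Longrightarrow> (\<And>Y. Y \<subseteq> X \<Longrightarrow> Y \<noteq> {} \<Longrightarrow> gf2_sum \<phi> Y \<noteq> {}) \<Longrightarrow> gf2_indep \<phi> X"
  unfolding gf2_indep_def by blast

lemma gf2_indep_subset: "gf2_indep \<phi> X \<Longrightarrow> Y \<subseteq> X \<Longrightarrow> gf2_indep \<phi> Y"
  unfolding gf2_indep_def apply (intro conjI)
  using finite_subset apply blast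
  using inj_on_subset apply blast
  by blast

lemma gf2_indep_cong: "(\<And>x. x \<in> X \<Longrightarrow> \<phi> x = \<phi>' x) \<Longrightarrow> gf2_indep \<phi> X = gf2_indep \<phi>' X"
proof -
  assume h: "\<And>x. x \<in> X \<Longrightarrow> \<phi> x = \<phi>' x"
  have "inj_on \<phi> X = inj_on \<phi>' X" using h inj_on_cong by blast
  moreover have "\<And>Y. Y \<subseteq> X \<Longrightarrow> gf2_sum \<phi> Y = gf2_sum \<phi>' Y"
    using h by (intro gf2_sum_cong) auto
  ultimately show ?thesis unfolding gf2_indep_def by auto
qed

lemma gf2_indep_reindex:
  assumes "inj_on \<psi> X"
  shows "gf2_indep \<phi> (\<psi> ` X) \<longleftrightarrow> gf2_indep (\<lambda>x. \<phi> (\<psi> x)) X"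
proof -
  have f: "finite (\<psi> ` X) \<longleftrightarrow> finite X" using assms finite_image_iff by blast
  have i: "inj_on \<phi> (\<psi> ` X) \<longleftrightarrow> inj_on (\<lambda>x. \<phi> (\<psi> x)) X"
    using comp_inj_on_iff[OF assms, of \<phi>] by (simp add: comp_def)
  have s: "(\<forall>Z. Z \<subseteq> \<psi> ` X \<and> Z \<noteq> {} \<longrightarrow> gf2_sum \<phi> Z \<noteq> {}) \<longleftrightarrow>
           (\<forall>Y. Y \<subseteq> X \<and> Y \<noteq> {} \<longrightarrow> gf2_sum (\<lambda>x. \<phi> (\<psi> x)) Y \<noteq> {})"
  proof
    assume h: "\<forall>Z. Z \<subseteq> \<psi> ` X \<and> Z \<noteq> {} \<longrightarrow> gf2_sum \<phi> Z \<noteq> {}"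
    show "\<forall>Y. Y \<subseteq> X \<and> Y \<noteq> {} \<longrightarrow> gf2_sum (\<lambda>x. \<phi> (\<psi> x)) Y \<noteq> {}"
    proof (intro allI impI)
      fix Y assume Y: "Y \<subseteq> X \<and> Y \<noteq> {}"
      then have "inj_on \<psi> Y" using assms inj_on_subset by blast
      then have "gf2_sum \<phi> (\<psi> ` Y) = gf2_sum (\<lambda>x. \<phi> (\<psi> x)) Y" by (rule gf2_sum_reindex)
      moreover have "\<psi> ` Y \<subseteq> \<psi> ` X \<and> \<psi> ` Y \<noteq> {}" using Y by blast
      then have "gf2_sum \<phi> (\<psi> ` Y) \<noteq> {}" using h[rule_format, of "\<psi> ` Y"] by blast
      ultimately show "gf2_sum (\<lambda>x. \<phi> (\<psi> x)) Y \<noteq> {}" by simp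
    qed
  next
    assume h: "\<forall>Y. Y \<subseteq> X \<and> Y \<noteq> {} \<longrightarrow> gf2_sum (\<lambda>x. \<phi> (\<psi> x)) Y \<noteq> {}"
    show "\<forall>Z. Z \<subseteq> \<psi> ` X \<and> Z \<noteq> {} \<longrightarrow> gf2_sum \<phi> Z \<noteq> {}"
    proof (intro allI impI)
      fix Z assume Z: "Z \<subseteq> \<psi> ` X \<and> Z \<noteq> {}"
      define Y where "Y = X \<inter> \<psi> -` Z"
      have ZY: "Z = \<psi> ` Y" using Z unfolding Y_def by auto
      have "inj_on \<psi> Y" using assms inj_on_subset unfolding Y_def by blast
      then have "gf2_sum \<phi> (\<psi> ` Y) = gf2_sum (\<lambda>x. \<phi> (\<psi> x)) Y" by (rule gf2_sum_reindex)
      moreover have "Y \<subseteq> X \<and> Y \<noteq> {}" using Z ZY unfolding Y_def by auto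
      ultimately show "gf2_sum \<phi> Z \<noteq> {}" using h[rule_format, of Y] ZY by simp
    qed
  qed
  show ?thesis unfolding gf2_indep_def using f i s by blast
qed

lemma gf2_indep_image: "gf2_indep \<phi> X \<longleftrightarrow> inj_on \<phi> X \<and> gf2_indep id (\<phi> ` X)"
proof (cases "inj_on \<phi> X")
  case True
  show ?thesis using gf2_indep_reindex[OF True, of id] True by (simp add: id_def)
next
  case False
  then show ?thesis unfolding gf2_indep_def by blast
qed

lemma gf2_indep_add1:
  assumes "additive h" "gf2_indep (\<lambda>x. h (\<phi> x)) X"
  shows "gf2_indep \<phi> X"
proof -
  have fin: "finite X" using assms(2) by (simp add: gf2_indep_def)
  have hi: "inj_on (\<lambda>x. h (\<phi> x)) X" using assms(2) unfolding gf2_indep_def by blast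
  have "inj_on \<phi> X"
  proof (rule inj_onI)
    fix x y assume "x \<in> X" "y \<in> X" "\<phi> x = \<phi> y"
    then show "x = y" using inj_onD[OF hi] by simp
  qed
  moreover have "\<forall>Y. Y \<subseteq> X \<and> Y \<noteq> {} \<longrightarrow> gf2_sum \<phi> Y \<noteq> {}"
  proof (intro allI impI notI)
    fix Y assume Y: "Y \<subseteq> X \<and> Y \<noteq> {}" and z: "gf2_sum \<phi> Y = {}"
    have "finite Y" using Y fin finite_subset by blast
    then have "gf2_sum (\<lambda>x. h (\<phi> x)) Y = h (gf2_sum \<phi> Y)" using gf2_sum_additive assms(1) by blast
    also have "\<dots> = {}" using z additive_empty[OF assms(1)] by simp
    finally show False using gf2_indep_sumD[OF assms(2) conjunct1[OF Y] conjunct2[OF Y]] by blast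
  qed
  ultimately show ?thesis using fin by (simp add: gf2_indep_def)
qed

lemma gf2_indep_add2:
  assumes "additive h" "gf2_indep \<phi> X"
    and ker: "\<And>Y. Y \<subseteq> X \<Longrightarrow> h (gf2_sum \<phi> Y) = {} \<Longrightarrow> gf2_sum \<phi> Y = {}"
  shows "gf2_indep (\<lambda>x. h (\<phi> x)) X"
proof -
  have fin: "finite X" using assms(2) by (simp add: gf2_indep_def)
  have "inj_on (\<lambda>x. h (\<phi> x)) X"
  proof (rule inj_onI, rule ccontr)
    fix x y assume xy: "x \<in> X" "y \<in> X" "h (\<phi> x) = h (\<phi> y)" "x \<noteq> y"
    have "h (gf2_sum \<phi> {x, y}) = xr (h (\<phi> x)) (h (\<phi> y))"
      using assms(1) gf2_sum_pair[OF xy(4), of \<phi>] unfolding additive_def by metis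
    then have "h (gf2_sum \<phi> {x, y}) = {}" using xy(3) by simp
    moreover have "{x, y} \<subseteq> X" using xy by blast
    ultimately have "gf2_sum \<phi> {x, y} = {}" using ker by blast
    then show False using gf2_indep_sumD[OF assms(2) \<open>{x, y} \<subseteq> X\<close>] by blast
  qed
  moreover have "\<forall>Y. Y \<subseteq> X \<and> Y \<noteq> {} \<longrightarrow> gf2_sum (\<lambda>x. h (\<phi> x)) Y \<noteq> {}"
  proof (intro allI impI notI)
    fix Y assume Y: "Y \<subseteq> X \<and> Y \<noteq> {}" and z: "gf2_sum (\<lambda>x. h (\<phi> x)) Y = {}"
    have "finite Y" using Y fin finite_subset by blast
    then have "h (gf2_sum \<phi> Y) = {}" using gf2_sum_additive[OF assms(1) \<open>finite Y\<close>, of \<phi>] z by simp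
    then have "gf2_sum \<phi> Y = {}" using ker[OF conjunct1[OF Y]] by blast
    then show False using gf2_indep_sumD[OF assms(2) conjunct1[OF Y] conjunct2[OF Y]] by blast
  qed
  ultimately show ?thesis using fin by (simp add: gf2_indep_def)
qed

lemma gf2_indep_span:
  assumes "gf2_indep id Y" "v \<notin> Y"
  shows "gf2_indep id (insert v Y) \<longleftrightarrow> (\<forall>Z\<subseteq>Y. gf2_sum id Z \<noteq> v)"
proof
  assume h: "gf2_indep id (insert v Y)"
  show "\<forall>Z\<subseteq>Y. gf2_sum id Z \<noteq> v"
  proof (intro allI impI notI)
    fix Z assume Z: "Z \<subseteq> Y" "gf2_sum id Z = v"
    have "finite Z" using Z gf2_indep_finite[OF assms(1)] finite_subset by blast
    then have "gf2_sum id (insert v Z) = {}" using Z assms(2) gf2_sum_insert[of Z v id] by auto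
    moreover have "insert v Z \<subseteq> insert v Y" using Z by blast
    ultimately show False using gf2_indep_sumD[OF h] by blast
  qed
next
  assume h: "\<forall>Z\<subseteq>Y. gf2_sum id Z \<noteq> v"
  have fin: "finite Y" using assms(1) by (simp add: gf2_indep_def)
  have "\<forall>W. W \<subseteq> insert v Y \<and> W \<noteq> {} \<longrightarrow> gf2_sum id W \<noteq> {}"
  proof (intro allI impI notI)
    fix W assume W: "W \<subseteq> insert v Y \<and> W \<noteq> {}" "gf2_sum id W = {}"
    show False
    proof (cases "v \<in> W")
      case False
      then have "W \<subseteq> Y" using W by blast
      then show False using gf2_indep_sumD[OF assms(1)] W by blast
    next
      case True
      have fW: "finite (W - {v})" using W fin finite_subset by blast
      have "W = insert v (W - {v})" using True by blast
      then have "gf2_sum id W = xr v (gf2_sum id (W - {v}))"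
        using gf2_sum_insert[OF fW, of v id] by simp
      then have "xr v (gf2_sum id (W - {v})) = {}" using W by simp
      then have "gf2_sum id (W - {v}) = v" by (metis xr_eq_empty)
      moreover have "W - {v} \<subseteq> Y" using W by blast
      ultimately show False using h by blast
    qed
  qed
  then show "gf2_indep id (insert v Y)" using fin by (simp add: gf2_indep_def)
qed

lemma gf2_indep_single[simp]: "gf2_indep \<phi> {x} \<longleftrightarrow> \<phi> x \<noteq> {}"
proof -
  have "\<And>Y. Y \<subseteq> {x} \<and> Y \<noteq> {} \<longleftrightarrow> Y = {x}" by blast
  then show ?thesis unfolding gf2_indep_def by auto
qed

lemma gf2_indep_pair:
  "gf2_indep \<phi> {s, x} \<longleftrightarrow> \<phi> s \<noteq> {} \<and> \<phi> x \<noteq> {} \<and> (s = x \<or> \<phi> s \<noteq> \<phi> x)"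
proof (cases "s = x")
  case True then show ?thesis by simp
next
  case False
  show ?thesis
  proof
    assume h: "gf2_indep \<phi> {s, x}"
    have "gf2_sum \<phi> {s} \<noteq> {}" using h unfolding gf2_indep_def by blast
    moreover have "gf2_sum \<phi> {x} \<noteq> {}" using h unfolding gf2_indep_def by blast
    moreover have "\<phi> s \<noteq> \<phi> x" using h False unfolding gf2_indep_def inj_on_def by blast
    ultimately show "\<phi> s \<noteq> {} \<and> \<phi> x \<noteq> {} \<and> (s = x \<or> \<phi> s \<noteq> \<phi> x)" by simp
  next
    assume h: "\<phi> s \<noteq> {} \<and> \<phi> x \<noteq> {} \<and> (s = x \<or> \<phi> s \<noteq> \<phi> x)"
    have i: "inj_on \<phi> {s, x}" using h False by auto
    have g1: "gf2_indep id {\<phi> x}" using h by simp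
    have g2: "\<phi> s \<notin> {\<phi> x}" using h False by auto
    have "\<forall>Z\<subseteq>{\<phi> x}. gf2_sum id Z \<noteq> \<phi> s"
    proof (intro allI impI)
      fix Z assume "Z \<subseteq> {\<phi> x}"
      then have "Z = {} \<or> Z = {\<phi> x}" by blast
      moreover have "\<phi> s \<noteq> {}" "\<phi> s \<noteq> \<phi> x" using h False by auto
      ultimately show "gf2_sum id Z \<noteq> \<phi> s" by (elim disjE) simp_all
    qed
    then have g3: "gf2_indep id (insert (\<phi> s) {\<phi> x})" using gf2_indep_span[OF g1 g2] by blast
    have eq: "\<phi> ` {s, x} = insert (\<phi> s) {\<phi> x}" by simp
    show "gf2_indep \<phi> {s, x}"
      unfolding gf2_indep_image[of \<phi> "{s, x}"] eq using i g3 by blast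
  qed
qed

lemma gf2_indep_card:
  assumes "gf2_indep id Y" "Y \<subseteq> Pow K" "finite K"
  shows "card Y \<le> card K"
proof -
  have fY: "finite Y" using assms(1) by (simp add: gf2_indep_def)
  have "inj_on (gf2_sum id) (Pow Y)"
  proof (rule inj_onI)
    fix A B assume AB: "A \<in> Pow Y" "B \<in> Pow Y" "gf2_sum id A = gf2_sum id B"
    have "finite A" "finite B" using AB fY finite_subset by auto
    then have "gf2_sum id (xr A B) = {}" using AB(3) gf2_sum_xr[where \<phi>=id] by simp
    moreover have "xr A B \<subseteq> Y" using AB by (auto simp: xr_def)
    ultimately have "xr A B = {}" using gf2_indep_sumD[OF assms(1)] by blast
    then show "A = B" by simp
  qed
  moreover have "gf2_sum id ` Pow Y \<subseteq> Pow K"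
    using assms(2) gf2_sum_subset by blast
  ultimately have "card (Pow Y) \<le> card (Pow K)"
    using assms(3) by (intro card_inj_on_le) auto
  then have "(2::nat) ^ card Y \<le> 2 ^ card K" using fY assms(3) by (simp add: card_Pow)
  then show ?thesis by simp
qed

definition proj :: "nat set \<Rightarrow> nat \<Rightarrow> nat set \<Rightarrow> nat set" where
  "proj p j u = xr u (if j \<in> u then p else {})"

lemma proj_additive: "j \<in> p \<Longrightarrow> additive (proj p j)"
  unfolding additive_def proj_def by (auto simp: xr_def)

lemma proj_p[simp]: "j \<in> p \<Longrightarrow> proj p j p = {}"
  unfolding proj_def by simp

lemma proj_zero: "proj p j u = {} \<longleftrightarrow> (if j \<in> u then u = p else u = {})"
  unfolding proj_def by simp

lemma proj_eq: "j \<in> p \<Longrightarrow> proj p j u = proj p j v \<longleftrightarrow> (v = u \<or> v = xr u p)"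
  unfolding proj_def xr_def by auto

lemma proj_notj: "j \<in> p \<Longrightarrow> j \<notin> proj p j u"
  unfolding proj_def xr_def by auto

lemma proj_ind:
  assumes "j \<in> p" "p \<notin> W"
  shows "gf2_indep id (insert p W) \<longleftrightarrow> gf2_indep (proj p j) W"
proof
  assume h: "gf2_indep id (insert p W)"
  have W: "gf2_indep id W" using h gf2_indep_subset by blast
  have "gf2_indep (\<lambda>x. proj p j (id x)) W"
  proof (rule gf2_indep_add2[OF proj_additive[OF assms(1)] W])
    fix Y assume Y: "Y \<subseteq> W" "proj p j (gf2_sum id Y) = {}"
    show "gf2_sum id Y = {}"
    proof (rule ccontr)
      assume "gf2_sum id Y \<noteq> {}"
      then have "gf2_sum id Y = p" using Y(2) unfolding proj_zero by (auto split: if_splits)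
      then show False using gf2_indep_span[OF W assms(2)] h Y(1) by blast
    qed
  qed
  then show "gf2_indep (proj p j) W" by simp
next
  assume h: "gf2_indep (proj p j) W"
  have W: "gf2_indep id W" using gf2_indep_add1[OF proj_additive[OF assms(1)], of id W] h by simp
  have fW: "finite W" using h by (simp add: gf2_indep_def)
  have "\<forall>Z\<subseteq>W. gf2_sum id Z \<noteq> p"
  proof (intro allI impI notI)
    fix Z assume Z: "Z \<subseteq> W" "gf2_sum id Z = p"
    have "finite Z" using Z fW finite_subset by blast
    then have "gf2_sum (\<lambda>x. proj p j (id x)) Z = proj p j (gf2_sum id Z)"
      using gf2_sum_additive[OF proj_additive[OF assms(1)]] by blast
    then have "gf2_sum (proj p j) Z = {}" using Z assms(1) by simp
    moreover have "Z \<noteq> {}" using Z assms(1) by auto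
    ultimately show False using h Z unfolding gf2_indep_def by blast
  qed
  then show "gf2_indep id (insert p W)" using gf2_indep_span[OF W assms(2)] by blast
qed


subsection \<open>Ranks and flats in PG\<close>

definition UU :: "nat \<Rightarrow> nat set set" where
  "UU k = {v. v \<subseteq> {..<k} \<and> v \<noteq> {}}"

lemma PG_ground: "ground (PG_rank k) = UU k"
  by (simp add: PG_rank_def ground_def UU_def)

lemma PG_indep: "indep (PG_rank k) X \<longleftrightarrow> X \<subseteq> UU k \<and> gf2_indep id X"
  by (simp add: PG_rank_def indep_def UU_def)

lemma finite_UU: "finite (UU k)"
proof -
  have "UU k \<subseteq> Pow {..<k}" by (auto simp: UU_def)
  then show ?thesis by (rule finite_subset) simp
qed

lemma gf2_indep_empty[simp]: "gf2_indep \<phi> {}"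
  by (simp add: gf2_indep_def)

lemma rk_ge:
  assumes "finite X" "Y \<subseteq> X" "indep M Y"
  shows "card Y \<le> rk M X"
proof -
  have "{card Y | Y. Y \<subseteq> X \<and> indep M Y} \<subseteq> card ` Pow X" by blast
  then have "finite {card Y | Y. Y \<subseteq> X \<and> indep M Y}"
    using assms(1) finite_subset by blast
  moreover have "card Y \<in> {card Y | Y. Y \<subseteq> X \<and> indep M Y}" using assms by blast
  ultimately show ?thesis unfolding rk_def by (rule Max_ge)
qed

lemma rk_obtain:
  assumes "finite X" "indep M {}"
  obtains Y where "Y \<subseteq> X" "indep M Y" "card Y = rk M X"
proof -
  have "{card Y | Y. Y \<subseteq> X \<and> indep M Y} \<subseteq> card ` Pow X" by blast
  then have "finite {card Y | Y. Y \<subseteq> X \<and> indep M Y}"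
    using assms(1) finite_subset by blast
  moreover have "{card Y | Y. Y \<subseteq> X \<and> indep M Y} \<noteq> {}" using assms(2) by blast
  ultimately have "rk M X \<in> {card Y | Y. Y \<subseteq> X \<and> indep M Y}" unfolding rk_def by (rule Max_in)
  then obtain Y where Y: "rk M X = card Y" "Y \<subseteq> X" "indep M Y" by auto
  show ?thesis using that[of Y] Y by simp
qed

lemma sum_closed:
  assumes cl: "\<forall>a\<in>C. \<forall>b\<in>C. a \<noteq> b \<longrightarrow> xr a b \<in> C" and "finite Z" "Z \<subseteq> C"
  shows "gf2_sum id Z \<in> insert {} C"
  using assms(2,3)
proof (induction Z rule: finite_induct)
  case empty then show ?case by simp
next
  case (insert z Z)
  have z: "z \<in> C" using insert.prems by simp
  have "Z \<subseteq> C" using insert.prems by simp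
  then have s: "gf2_sum id Z \<in> insert {} C" by (rule insert.IH)
  have e: "gf2_sum id (insert z Z) = xr z (gf2_sum id Z)"
    using gf2_sum_insert[OF insert(1,2), of id] by simp
  show ?case
  proof (cases "gf2_sum id Z = {}")
    case True then show ?thesis unfolding e using z by simp
  next
    case False
    show ?thesis
    proof (cases "gf2_sum id Z = z")
      case True then show ?thesis unfolding e by simp
    next
      case False2: False
      then have "xr z (gf2_sum id Z) \<in> C" using cl s z False by auto
      then show ?thesis unfolding e by simp
    qed
  qed
qed

lemma closed_extend:
  assumes cl: "\<forall>a\<in>C. \<forall>b\<in>C. a \<noteq> b \<longrightarrow> xr a b \<in> C"
    and Y: "Y \<subseteq> C" "gf2_indep id Y" and x: "x \<notin> C" "x \<noteq> {}"
  shows "gf2_indep id (insert x Y)" "card (insert x Y) = Suc (card Y)"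
proof -
  have xY: "x \<notin> Y" using Y x by blast
  have fY: "finite Y" using gf2_indep_finite[OF Y(2)] .
  have "\<forall>Z\<subseteq>Y. gf2_sum id Z \<noteq> x"
  proof (intro allI impI)
    fix Z assume ZY: "Z \<subseteq> Y"
    then have fZ: "finite Z" using fY finite_subset by blast
    have "gf2_sum id Z \<in> insert {} C" using sum_closed[OF cl fZ subset_trans[OF ZY Y(1)]] .
    then show "gf2_sum id Z \<noteq> x" using x by auto
  qed
  then show "gf2_indep id (insert x Y)" using gf2_indep_span[OF Y(2) xY] by blast
  show "card (insert x Y) = Suc (card Y)" using fY xY by simp
qed

lemma closed_flat:
  assumes "C \<subseteq> UU k" and cl: "\<forall>a\<in>C. \<forall>b\<in>C. a \<noteq> b \<longrightarrow> xr a b \<in> C"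
  shows "flat (PG_rank k) C"
  unfolding flat_def PG_ground
proof (intro conjI ballI)
  show "C \<subseteq> UU k" by fact
  fix x assume x: "x \<in> UU k - C"
  have fC: "finite C" using assms(1) finite_UU finite_subset by blast
  obtain Y where Y: "Y \<subseteq> C" "indep (PG_rank k) Y" "card Y = rk (PG_rank k) C"
    using rk_obtain[OF fC, of "PG_rank k"] by (auto simp: PG_indep)
  have gY: "gf2_indep id Y" using Y(2) by (simp add: PG_indep)
  have xn: "x \<notin> C" "x \<noteq> {}" using x by (auto simp: UU_def)
  have "indep (PG_rank k) (insert x Y)"
    using closed_extend(1)[OF cl Y(1) gY xn] Y(1) assms(1) x by (auto simp: PG_indep)
  then have "card (insert x Y) \<le> rk (PG_rank k) (insert x C)"
    using Y(1) fC by (intro rk_ge) auto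
  then show "rk (PG_rank k) (insert x C) > rk (PG_rank k) C"
    using closed_extend(2)[OF cl Y(1) gY xn] Y(3) by simp
qed

lemma closed_rk:
  assumes "C \<subseteq> UU k" and cl: "\<forall>a\<in>C. \<forall>b\<in>C. a \<noteq> b \<longrightarrow> xr a b \<in> C"
    and x: "x \<in> UU k" "x \<notin> C"
  shows "rk (PG_rank k) C < k"
proof -
  have fC: "finite C" using assms(1) finite_UU finite_subset by blast
  obtain Y where Y: "Y \<subseteq> C" "indep (PG_rank k) Y" "card Y = rk (PG_rank k) C"
    using rk_obtain[OF fC, of "PG_rank k"] by (auto simp: PG_indep)
  have gY: "gf2_indep id Y" using Y(2) by (simp add: PG_indep)
  have xn: "x \<notin> C" "x \<noteq> {}" using x by (auto simp: UU_def)
  have "insert x Y \<subseteq> Pow {..<k}" using Y(1) assms(1) x by (auto simp: UU_def)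
  then have "card (insert x Y) \<le> card {..<k}"
    using gf2_indep_card closed_extend(1)[OF cl Y(1) gY xn] by blast
  then show ?thesis using closed_extend(2)[OF cl Y(1) gY xn] Y(3) by simp
qed

lemma flat_closed:
  assumes F: "flat (PG_rank k) F" and ab: "a \<in> F" "b \<in> F" "a \<noteq> b"
  shows "xr a b \<in> F"
proof (rule ccontr)
  define c where "c = xr a b"
  assume "xr a b \<notin> F"
  then have cF: "c \<notin> F" by (simp add: c_def)
  have FU: "F \<subseteq> UU k" using F by (simp add: flat_def PG_ground)
  have cU: "c \<in> UU k" using FU ab unfolding c_def UU_def by (auto simp: xr_def)
  have gt: "rk (PG_rank k) (insert c F) > rk (PG_rank k) F"
    using F cU cF by (simp add: flat_def PG_ground)
  have fF: "finite F" using FU finite_UU finite_subset by blast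
  then have fcF: "finite (insert c F)" by simp
  obtain Y where Y: "Y \<subseteq> insert c F" "indep (PG_rank k) Y" "card Y = rk (PG_rank k) (insert c F)"
    using rk_obtain[OF fcF, of "PG_rank k"] by (auto simp: PG_indep)
  have gY: "gf2_indep id Y" and YU: "Y \<subseteq> UU k" using Y(2) by (auto simp: PG_indep)
  show False
  proof (cases "c \<in> Y")
    case False
    then have "Y \<subseteq> F" using Y(1) by blast
    then have "card Y \<le> rk (PG_rank k) F" using rk_ge[OF fF _ Y(2)] by blast
    then show False using gt Y(3) by simp
  next
    case True
    define Y' where "Y' = Y - {c}"
    have gY': "gf2_indep id Y'" using gf2_indep_subset[OF gY] unfolding Y'_def by blast
    have cY': "c \<notin> Y'" unfolding Y'_def by blast
    have YY: "Y = insert c Y'" using True unfolding Y'_def by blast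
    have fY': "finite Y'" using gf2_indep_finite[OF gY'] .
    have nc: "\<forall>Z\<subseteq>Y'. gf2_sum id Z \<noteq> c"
      by (rule gf2_indep_span[OF gY' cY', THEN iffD1, OF gY[unfolded YY]])
    have "\<exists>z\<in>{a, b}. \<forall>Z\<subseteq>Y'. gf2_sum id Z \<noteq> z"
    proof (cases "\<forall>Z\<subseteq>Y'. gf2_sum id Z \<noteq> a")
      case True then show ?thesis by blast
    next
      case False
      then obtain A where A: "A \<subseteq> Y'" "gf2_sum id A = a" by blast
      show ?thesis
      proof (cases "\<forall>Z\<subseteq>Y'. gf2_sum id Z \<noteq> b")
        case True then show ?thesis by blast
      next
        case False
        then obtain B where B: "B \<subseteq> Y'" "gf2_sum id B = b" by blast
        have fA: "finite A" using A(1) fY' finite_subset by blast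
        have fB: "finite B" using B(1) fY' finite_subset by blast
        have "gf2_sum id (xr A B) = xr (gf2_sum id A) (gf2_sum id B)" by (rule gf2_sum_xr[OF fA fB])
        then have "gf2_sum id (xr A B) = c" unfolding c_def A(2) B(2) .
        moreover have "xr A B \<subseteq> Y'" using A(1) B(1) by (rule xr_subset)
        ultimately show ?thesis using nc by blast
      qed
    qed
    then obtain z where z: "z \<in> {a, b}" "\<forall>Z\<subseteq>Y'. gf2_sum id Z \<noteq> z" by blast
    have zY': "z \<notin> Y'"
    proof
      assume "z \<in> Y'"
      then have "{z} \<subseteq> Y'" by blast
      then have "gf2_sum id {z} \<noteq> z" using z(2) by blast
      then show False by simp
    qed
    have gi: "gf2_indep id (insert z Y')" using gf2_indep_span[OF gY' zY'] z(2) by blast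
    have sub: "insert z Y' \<subseteq> F" using z ab Y(1) YY cY' by blast
    then have "insert z Y' \<subseteq> UU k" using FU by blast
    then have "indep (PG_rank k) (insert z Y')" using gi by (simp add: PG_indep)
    then have "card (insert z Y') \<le> rk (PG_rank k) F" using rk_ge[OF fF sub] by blast
    moreover have "card (insert z Y') = Suc (card Y')" using fY' zY' by simp
    moreover have "card Y = Suc (card Y')" unfolding YY using fY' cY' by simp
    ultimately show False using gt Y(3) by simp
  qed
qed

lemma rep_exists:
  assumes m: "matroid M" and s: "simple M" and b: "binary M" and rnk: "rank M = r + 1"
  shows "\<exists>\<psi>. inj_on \<psi> (ground M) \<and> \<psi> ` ground M \<subseteq> UU (r + 1) \<and>
           (\<forall>X. X \<subseteq> ground M \<longrightarrow> (indep M X \<longleftrightarrow> gf2_indep id (\<psi> ` X)))"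
proof -
  define E where "E = ground M"
  obtain \<phi> :: "'a \<Rightarrow> nat set" where phi: "\<And>X. X \<subseteq> E \<Longrightarrow> indep M X \<longleftrightarrow> gf2_indep \<phi> X"
    using b unfolding binary_def E_def by blast
  have fE: "finite E" and i0: "indep M {}" using m unfolding matroid_def E_def by auto
  obtain B where B: "B \<subseteq> E" "indep M B" "card B = r + 1"
    using rk_obtain[OF fE i0] rnk unfolding rank_def E_def by metis
  have bound: "\<And>Y. Y \<subseteq> E \<Longrightarrow> indep M Y \<Longrightarrow> card Y \<le> r + 1"
    using rk_ge[OF fE] rnk unfolding rank_def E_def by metis
  have gB: "gf2_indep \<phi> B" using phi B by blast
  define K where "K = {..<r + 1}"
  have fB: "finite B" using gf2_indep_finite[OF gB] .
  obtain f where f: "bij_betw f {0..<card B} B" using ex_bij_betw_nat_finite[OF fB] by blast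
  then have f: "bij_betw f K B" unfolding K_def using B(3) by (simp add: atLeast0LessThan)
  have fK: "f ` K = B" and injf: "inj_on f K" using f by (auto simp: bij_betw_def)
  define bb where "bb = (\<lambda>i. \<phi> (f i))"
  have gb: "gf2_indep bb K"
    using gf2_indep_reindex[OF injf, of \<phi>] gB fK unfolding bb_def by simp
  define g where "g = (\<lambda>c. gf2_sum bb (c \<inter> K))"
  have finK: "finite K" unfolding K_def by simp
  have addg: "additive g"
    unfolding additive_def
  proof (intro allI)
    fix c d
    have "xr c d \<inter> K = xr (c \<inter> K) (d \<inter> K)" by (auto simp: xr_def)
    moreover have "finite (c \<inter> K)" "finite (d \<inter> K)" using finK by auto
    ultimately show "g (xr c d) = xr (g c) (g d)" unfolding g_def using gf2_sum_xr by metis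
  qed
  have gker: "\<And>c. c \<subseteq> K \<Longrightarrow> g c = {} \<Longrightarrow> c = {}"
  proof (rule ccontr)
    fix c assume c: "c \<subseteq> K" "g c = {}" "c \<noteq> {}"
    have "g c = gf2_sum bb c" unfolding g_def using c(1) by (simp add: Int_absorb2)
    then show False using gf2_indep_sumD[OF gb c(1) c(3)] c(2) by simp
  qed
  have gsum: "\<And>Z. Z \<subseteq> \<phi> ` B \<Longrightarrow> \<exists>c\<subseteq>K. gf2_sum id Z = g c"
  proof -
    fix Z assume Z: "Z \<subseteq> \<phi> ` B"
    define c where "c = K \<inter> bb -` Z"
    have bK: "bb ` K = \<phi> ` B" unfolding bb_def using fK by auto
    have ZK: "Z \<subseteq> bb ` K" using Z bK by simp
    have Zc: "Z = bb ` c"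
    proof
      show "Z \<subseteq> bb ` c"
      proof
        fix z assume "z \<in> Z"
        then obtain i where "i \<in> K" "z = bb i" using ZK by blast
        then show "z \<in> bb ` c" unfolding c_def using \<open>z \<in> Z\<close> by blast
      qed
      show "bb ` c \<subseteq> Z" unfolding c_def by blast
    qed
    have injb: "inj_on bb K" using gf2_indep_inj[OF gb] .
    have "inj_on bb c" using inj_on_subset[OF injb] unfolding c_def by blast
    then have "gf2_sum id (bb ` c) = gf2_sum (\<lambda>y. id (bb y)) c" by (rule gf2_sum_reindex)
    moreover have "c \<inter> K = c" unfolding c_def by blast
    then have "g c = gf2_sum bb c" unfolding g_def by simp
    ultimately have "gf2_sum id Z = g c" using Zc by simp
    moreover have "c \<subseteq> K" unfolding c_def by blast
    ultimately show "\<exists>c\<subseteq>K. gf2_sum id Z = g c" by blast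
  qed
  have gsing: "\<And>i. i \<in> K \<Longrightarrow> g {i} = bb i" unfolding g_def by simp
  have span: "\<And>x. x \<in> E \<Longrightarrow> \<exists>c\<subseteq>K. g c = \<phi> x"
  proof (rule ccontr)
    fix x assume x: "x \<in> E" and nx: "\<not> (\<exists>c\<subseteq>K. g c = \<phi> x)"
    have nx': "\<And>c. c \<subseteq> K \<Longrightarrow> g c \<noteq> \<phi> x" using nx by blast
    have xB: "\<phi> x \<notin> \<phi> ` B"
    proof
      assume "\<phi> x \<in> \<phi> ` B"
      then obtain i where i: "i \<in> K" "\<phi> x = \<phi> (f i)" using fK by auto
      then have "g {i} = \<phi> x" using gsing unfolding bb_def by simp
      then show False using nx' i(1) by blast
    qed
    then have xB2: "x \<notin> B" by blast
    have injB: "inj_on \<phi> B" using gf2_indep_inj[OF gB] .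
    have gpB: "gf2_indep id (\<phi> ` B)" using gf2_indep_image[THEN iffD1, OF gB] by (rule conjunct2)
    have allZ: "\<forall>Z\<subseteq>\<phi> ` B. gf2_sum id Z \<noteq> \<phi> x"
    proof (intro allI impI)
      fix Z assume Z: "Z \<subseteq> \<phi> ` B"
      obtain c where c: "c \<subseteq> K" "gf2_sum id Z = g c" using gsum[OF Z] by blast
      show "gf2_sum id Z \<noteq> \<phi> x" unfolding c(2) by (rule nx'[OF c(1)])
    qed
    have g1: "gf2_indep id (insert (\<phi> x) (\<phi> ` B))"
      by (rule gf2_indep_span[OF gpB xB, THEN iffD2, OF allZ])
    have inj1: "inj_on \<phi> (insert x B)" unfolding inj_on_insert using injB xB by blast
    have im: "\<phi> ` insert x B = insert (\<phi> x) (\<phi> ` B)" by simp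
    have g2: "gf2_indep id (\<phi> ` insert x B)" unfolding im by (rule g1)
    have gi: "gf2_indep \<phi> (insert x B)"
      by (rule gf2_indep_image[THEN iffD2, OF conjI[OF inj1 g2]])
    have sub: "insert x B \<subseteq> E" using x B(1) by blast
    have "indep M (insert x B)" using phi[OF sub] gi by blast
    then have "card (insert x B) \<le> r + 1" by (rule bound[OF sub])
    then show False using xB2 fB B(3) by simp
  qed
  define \<psi> where "\<psi> = (\<lambda>x. SOME c. c \<subseteq> K \<and> g c = \<phi> x)"
  have psi: "\<And>x. x \<in> E \<Longrightarrow> \<psi> x \<subseteq> K \<and> g (\<psi> x) = \<phi> x"
  proof -
    fix x assume "x \<in> E"
    then have "\<exists>c. c \<subseteq> K \<and> g c = \<phi> x" using span by blast
    then show "\<psi> x \<subseteq> K \<and> g (\<psi> x) = \<phi> x" unfolding \<psi>_def by (rule someI_ex)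
  qed
  have pair: "\<And>x y. x \<in> E \<Longrightarrow> y \<in> E \<Longrightarrow> gf2_indep \<phi> {x, y}"
  proof -
    fix x y assume "x \<in> E" "y \<in> E"
    then have "indep M {x, y}" "{x, y} \<subseteq> E" using s unfolding simple_def E_def by auto
    then show "gf2_indep \<phi> {x, y}" using phi by blast
  qed
  have phinz: "\<And>x. x \<in> E \<Longrightarrow> \<phi> x \<noteq> {}"
  proof -
    fix x assume x: "x \<in> E"
    have "gf2_indep \<phi> {x, x}" using pair[OF x x] .
    then show "\<phi> x \<noteq> {}" by simp
  qed
  have psinz: "\<And>x. x \<in> E \<Longrightarrow> \<psi> x \<noteq> {}"
  proof
    fix x assume x: "x \<in> E" and z: "\<psi> x = {}"
    have "g (\<psi> x) = \<phi> x" using psi[OF x] by blast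
    then have "\<phi> x = {}" using z additive_empty[OF addg] by simp
    then show False using phinz[OF x] by blast
  qed
  have injpsi: "inj_on \<psi> E"
  proof (rule inj_onI)
    fix x y assume xy: "x \<in> E" "y \<in> E" "\<psi> x = \<psi> y"
    have "g (\<psi> x) = \<phi> x" "g (\<psi> y) = \<phi> y" using psi[OF xy(1)] psi[OF xy(2)] by blast+
    then have "\<phi> x = \<phi> y" using xy(3) by simp
    moreover have "x = y \<or> \<phi> x \<noteq> \<phi> y"
      using gf2_indep_pair[THEN iffD1, OF pair[OF xy(1,2)]] by blast
    ultimately show "x = y" by blast
  qed
  have U: "\<psi> ` E \<subseteq> UU (r + 1)" using psi psinz unfolding UU_def K_def by auto
  have eqv: "\<And>X. X \<subseteq> E \<Longrightarrow> indep M X \<longleftrightarrow> gf2_indep id (\<psi> ` X)"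
  proof -
    fix X assume X: "X \<subseteq> E"
    have "indep M X \<longleftrightarrow> gf2_indep \<phi> X" using phi X by blast
    also have "\<dots> \<longleftrightarrow> gf2_indep (\<lambda>x. g (\<psi> x)) X"
      using X psi by (intro gf2_indep_cong) auto
    also have "\<dots> \<longleftrightarrow> gf2_indep \<psi> X"
    proof
      assume "gf2_indep (\<lambda>x. g (\<psi> x)) X"
      then show "gf2_indep \<psi> X" using gf2_indep_add1[OF addg] by blast
    next
      assume h: "gf2_indep \<psi> X"
      show "gf2_indep (\<lambda>x. g (\<psi> x)) X"
      proof (rule gf2_indep_add2[OF addg h])
        fix Y assume Y: "Y \<subseteq> X" "g (gf2_sum \<psi> Y) = {}"
        have "gf2_sum \<psi> Y \<subseteq> K" using Y(1) X psi by (intro gf2_sum_subset') auto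
        then show "gf2_sum \<psi> Y = {}" using gker Y(2) by blast
      qed
    qed
    also have "\<dots> \<longleftrightarrow> gf2_indep id (\<psi> ` X)"
      using gf2_indep_image[of \<psi> X] inj_on_subset[OF injpsi X] by blast
    finally show "indep M X \<longleftrightarrow> gf2_indep id (\<psi> ` X)" .
  qed
  show ?thesis using injpsi U eqv unfolding E_def by blast
qed

lemma ground_restrict[simp]: "ground (restrict M S) = S \<inter> ground M"
  by (simp add: restrict_def ground_def)
lemma indep_restrict[simp]: "indep (restrict M S) X \<longleftrightarrow> X \<subseteq> S \<and> indep M X"
  by (simp add: restrict_def indep_def)
lemma ground_contract[simp]: "ground (contract M e) = ground M - {e}"
  by (simp add: contract_def ground_def)
lemma indep_contract: "indep (contract M e) X \<longleftrightarrow>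
    e \<notin> X \<and> (if loop M e then indep M X else indep M (insert e X))"
  by (simp add: contract_def indep_def)

definition sig :: "nat \<Rightarrow> nat \<Rightarrow> nat" where
  "sig j i = (if i < j then i else Suc i)"

lemma sig_inj: "inj (sig j)"
  unfolding sig_def inj_def by auto

lemma sig_ne: "sig j i \<noteq> j"
  unfolding sig_def by auto

lemma sig_onto: "m \<noteq> j \<Longrightarrow> \<exists>i. sig j i = m"
proof -
  assume "m \<noteq> j"
  show "\<exists>i. sig j i = m"
  proof (cases "m < j")
    case True then show ?thesis by (intro exI[of _ m]) (simp add: sig_def)
  next
    case False
    then have "m > j" using \<open>m \<noteq> j\<close> by simp
    then show ?thesis by (intro exI[of _ "m - 1"]) (auto simp: sig_def)
  qed
qed

lemma sig_image_vimage: "j \<notin> w \<Longrightarrow> sig j ` (sig j -` w) = w"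
proof
  assume j: "j \<notin> w"
  show "w \<subseteq> sig j ` (sig j -` w)"
  proof
    fix m assume m: "m \<in> w"
    then have "m \<noteq> j" using j by blast
    then obtain i where "sig j i = m" using sig_onto by blast
    then show "m \<in> sig j ` (sig j -` w)" using m by blast
  qed
qed blast

lemma tau_additive: "additive (\<lambda>w. sig j -` w)"
  unfolding additive_def xr_def by auto

lemma lt_sig: "j < Suc r \<Longrightarrow> sig j i < Suc r \<longleftrightarrow> i < r"
  unfolding sig_def by auto


lemma contract_iff:
  assumes inj: "inj_on \<psi> (ground M)" and U: "\<psi> ` ground M \<subseteq> UU (r + 1)"
    and eqv: "\<forall>X. X \<subseteq> ground M \<longrightarrow> (indep M X \<longleftrightarrow> gf2_indep id (\<psi> ` X))"
    and e: "e \<in> ground M"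
  shows "(\<exists>S. is_simplification (contract M e) S \<and> iso (restrict (contract M e) S) (PG_rank r)) \<longleftrightarrow>
         (\<forall>u\<in>UU (r + 1). u \<noteq> \<psi> e \<longrightarrow> u \<in> \<psi> ` ground M \<or> xr u (\<psi> e) \<in> \<psi> ` ground M)"
proof -
  define E where "E = ground M"
  define p where "p = \<psi> e"
  define N where "N = contract M e"
  have eqv': "\<And>X. X \<subseteq> E \<Longrightarrow> indep M X \<longleftrightarrow> gf2_indep id (\<psi> ` X)" using eqv unfolding E_def by blast
  have pU: "p \<in> UU (r + 1)" using U e unfolding p_def by blast
  then have pne: "p \<noteq> {}" and psub: "p \<subseteq> {..<r + 1}" by (auto simp: UU_def)
  define j where "j = (SOME j. j \<in> p)"
  have jp: "j \<in> p" unfolding j_def using pne some_in_eq by blast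
  have jr: "j < Suc r" using jp psub by auto
  define \<chi> where "\<chi> = (\<lambda>x. proj p j (\<psi> x))"
  define \<tau> where "\<tau> = (\<lambda>w. sig j -` w)"
  define \<kappa> where "\<kappa> = (\<lambda>x. \<tau> (\<chi> x))"
  define KK where "KK = {w. w \<subseteq> {..<r + 1} \<and> j \<notin> w \<and> w \<noteq> {}}"
  have psiU: "\<And>x. x \<in> E \<Longrightarrow> \<psi> x \<in> UU (r + 1)" using U unfolding E_def by blast
  have nl: "\<not> loop M e"
  proof -
    have "gf2_indep id (\<psi> ` {e})" using pne unfolding p_def by simp
    then have "indep M {e}" using eqv' e unfolding E_def by blast
    then show ?thesis unfolding loop_def by blast
  qed
  have gN: "ground N = E - {e}" unfolding N_def E_def by simp
  have iN: "\<And>X. indep N X \<longleftrightarrow> e \<notin> X \<and> indep M (insert e X)"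
    unfolding N_def indep_contract using nl by simp
  have iN2: "\<And>X. X \<subseteq> E - {e} \<Longrightarrow> indep N X \<longleftrightarrow> gf2_indep \<chi> X"
  proof -
    fix X assume X: "X \<subseteq> E - {e}"
    have injX: "inj_on \<psi> X" using inj_on_subset[OF inj] X unfolding E_def by blast
    have pX: "p \<notin> \<psi> ` X"
    proof
      assume "p \<in> \<psi> ` X"
      then obtain x where "x \<in> X" "\<psi> x = \<psi> e" unfolding p_def by blast
      then show False using inj X e unfolding inj_on_def E_def by blast
    qed
    have "insert e X \<subseteq> E" using X e unfolding E_def by blast
    then have "indep N X \<longleftrightarrow> gf2_indep id (\<psi> ` insert e X)" using iN eqv' X by blast
    also have "\<psi> ` insert e X = insert p (\<psi> ` X)" unfolding p_def by simp
    also have "gf2_indep id (insert p (\<psi> ` X)) \<longleftrightarrow> gf2_indep (proj p j) (\<psi> ` X)"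
      by (rule proj_ind[OF jp pX])
    also have "\<dots> \<longleftrightarrow> gf2_indep \<chi> X" unfolding \<chi>_def by (rule gf2_indep_reindex[OF injX])
    finally show "indep N X \<longleftrightarrow> gf2_indep \<chi> X" .
  qed
  have psine: "\<And>x. x \<in> E - {e} \<Longrightarrow> \<psi> x \<noteq> p"
    using inj e unfolding inj_on_def E_def p_def by blast
  have chiK: "\<And>u. u \<in> UU (r + 1) \<Longrightarrow> u \<noteq> p \<Longrightarrow> proj p j u \<in> KK"
  proof -
    fix u assume u: "u \<in> UU (r + 1)" "u \<noteq> p"
    have "u \<subseteq> {..<r + 1}" "u \<noteq> {}" using u(1) by (auto simp: UU_def)
    then have "proj p j u \<subseteq> {..<r + 1}" unfolding proj_def using psub
      by (cases "j \<in> u") (simp_all add: xr_subset)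
    moreover have "j \<notin> proj p j u" using proj_notj[OF jp] .
    moreover have "proj p j u \<noteq> {}" using u(2) \<open>u \<noteq> {}\<close> unfolding proj_zero by simp
    ultimately show "proj p j u \<in> KK" unfolding KK_def by blast
  qed
  have chiK': "\<And>x. x \<in> E - {e} \<Longrightarrow> \<chi> x \<in> KK"
    unfolding \<chi>_def using chiK psiU psine by blast
  have chinz: "\<And>x. x \<in> E - {e} \<Longrightarrow> \<chi> x \<noteq> {}" using chiK' unfolding KK_def by blast
  have noloop: "\<And>x. x \<in> E - {e} \<Longrightarrow> \<not> loop N x"
  proof -
    fix x assume x: "x \<in> E - {e}"
    have "indep N {x}" using iN2[of "{x}"] x chinz[OF x] by simp
    then show "\<not> loop N x" unfolding loop_def by blast
  qed
  have par: "\<And>s x. s \<in> E - {e} \<Longrightarrow> x \<in> E - {e} \<Longrightarrow> (s = x \<or> parallel N s x) \<longleftrightarrow> \<chi> s = \<chi> x"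
  proof -
    fix s x assume s: "s \<in> E - {e}" and x: "x \<in> E - {e}"
    have "{s, x} \<subseteq> E - {e}" using s x by blast
    then have "indep N {s, x} \<longleftrightarrow> (s = x \<or> \<chi> s \<noteq> \<chi> x)"
      using iN2 gf2_indep_pair[of \<chi> s x] chinz[OF s] chinz[OF x] by simp
    then have "parallel N s x \<longleftrightarrow> s \<noteq> x \<and> \<chi> s = \<chi> x"
      unfolding parallel_def gN using s x noloop by blast
    then show "(s = x \<or> parallel N s x) \<longleftrightarrow> \<chi> s = \<chi> x" by blast
  qed
  have tau_add: "additive \<tau>" unfolding \<tau>_def by (rule tau_additive)
  have tauU: "\<And>w. w \<in> KK \<Longrightarrow> \<tau> w \<in> UU r"
  proof -
    fix w assume w: "w \<in> KK"
    have "\<tau> w \<subseteq> {..<r}"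
    proof
      fix i assume "i \<in> \<tau> w"
      then have "sig j i \<in> w" unfolding \<tau>_def by simp
      then have "sig j i < Suc r" using w unfolding KK_def by auto
      then show "i \<in> {..<r}" using lt_sig[OF jr] by simp
    qed
    moreover have "\<tau> w \<noteq> {}"
    proof -
      obtain m where m: "m \<in> w" using w unfolding KK_def by blast
      then have "m \<noteq> j" using w unfolding KK_def by blast
      then obtain i where "sig j i = m" using sig_onto by blast
      then have "i \<in> \<tau> w" unfolding \<tau>_def using m by simp
      then show ?thesis by blast
    qed
    ultimately show "\<tau> w \<in> UU r" unfolding UU_def by blast
  qed
  have tau_inj: "inj_on \<tau> KK"
  proof (rule inj_onI)
    fix w w' assume "w \<in> KK" "w' \<in> KK" "\<tau> w = \<tau> w'"
    then have "j \<notin> w" "j \<notin> w'" "sig j -` w = sig j -` w'" unfolding KK_def \<tau>_def by auto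
    then show "w = w'" using sig_image_vimage by metis
  qed
  have tau_onto: "\<tau> ` KK = UU r"
  proof
    show "\<tau> ` KK \<subseteq> UU r" using tauU by blast
    show "UU r \<subseteq> \<tau> ` KK"
    proof
      fix c assume c: "c \<in> UU r"
      have "sig j ` c \<subseteq> {..<r + 1}"
      proof
        fix m assume "m \<in> sig j ` c"
        then obtain i where "i \<in> c" "m = sig j i" by blast
        then show "m \<in> {..<r + 1}" using c lt_sig[OF jr, of i] unfolding UU_def by auto
      qed
      moreover have "j \<notin> sig j ` c" using sig_ne[of j] by (metis imageE)
      moreover have "sig j ` c \<noteq> {}" using c unfolding UU_def by blast
      ultimately have "sig j ` c \<in> KK" unfolding KK_def by blast
      moreover have "\<tau> (sig j ` c) = c" unfolding \<tau>_def using sig_inj by (simp add: inj_vimage_image_eq)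
      ultimately show "c \<in> \<tau> ` KK" by (metis imageI)
    qed
  qed
  have tau_bij: "bij_betw \<tau> KK (UU r)" unfolding bij_betw_def using tau_inj tau_onto by blast
  have finKK: "finite KK"
  proof -
    have "KK \<subseteq> Pow {..<r + 1}" unfolding KK_def by blast
    then show ?thesis by (rule finite_subset) simp
  qed
  have cardKK: "card KK = card (UU r)" using bij_betw_same_card[OF tau_bij] .
  have iN3: "\<And>X. X \<subseteq> E - {e} \<Longrightarrow> indep N X \<longleftrightarrow> gf2_indep \<kappa> X"
  proof -
    fix X assume X: "X \<subseteq> E - {e}"
    have "gf2_indep \<chi> X \<longleftrightarrow> gf2_indep \<kappa> X"
    proof
      assume h: "gf2_indep \<chi> X"
      show "gf2_indep \<kappa> X" unfolding \<kappa>_def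
      proof (rule gf2_indep_add2[OF tau_add h])
        fix Y assume Y: "Y \<subseteq> X" "\<tau> (gf2_sum \<chi> Y) = {}"
        have "gf2_sum \<chi> Y \<subseteq> - {j}"
          using Y(1) X chiK' unfolding KK_def by (intro gf2_sum_subset') blast
        then have "j \<notin> gf2_sum \<chi> Y" by blast
        then have "gf2_sum \<chi> Y = sig j ` (\<tau> (gf2_sum \<chi> Y))" unfolding \<tau>_def
          using sig_image_vimage by metis
        then show "gf2_sum \<chi> Y = {}" using Y(2) by simp
      qed
    next
      assume "gf2_indep \<kappa> X"
      then show "gf2_indep \<chi> X" unfolding \<kappa>_def using gf2_indep_add1[OF tau_add] by blast
    qed
    then show "indep N X \<longleftrightarrow> gf2_indep \<kappa> X" using iN2[OF X] by blast
  qed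
  have chieq: "\<And>x u. proj p j (\<psi> x) = proj p j u \<longleftrightarrow> (u = \<psi> x \<or> u = xr (\<psi> x) p)"
    using proj_eq[OF jp] by blast
  show ?thesis
  proof
    assume "\<exists>S. is_simplification (contract M e) S \<and> iso (restrict (contract M e) S) (PG_rank r)"
    then obtain S where simp: "is_simplification N S" and iso: "iso (restrict N S) (PG_rank r)"
      unfolding N_def by blast
    have SE: "S \<subseteq> E - {e}" using simp unfolding is_simplification_def gN by blast
    have uniq: "\<And>x. x \<in> E - {e} \<Longrightarrow> \<exists>!s. s \<in> S \<and> (s = x \<or> parallel N s x)"
      using simp noloop unfolding is_simplification_def gN by blast
    obtain f where f: "bij_betw f (ground (restrict N S)) (ground (PG_rank r))"
      using iso unfolding iso_def by blast
    have "ground (restrict N S) = S" using SE gN by auto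
    then have "card S = card (UU r)" using bij_betw_same_card[OF f] by (simp add: PG_ground)
    have injS: "inj_on \<chi> S"
    proof (rule inj_onI)
      fix s s' assume ss: "s \<in> S" "s' \<in> S" "\<chi> s = \<chi> s'"
      have s'E: "s' \<in> E - {e}" using ss SE by blast
      have "s \<in> S \<and> (s = s' \<or> parallel N s s')" using par[of s s'] ss SE by blast
      moreover have "s' \<in> S \<and> (s' = s' \<or> parallel N s' s')" using ss by blast
      ultimately show "s = s'" using uniq[OF s'E] by blast
    qed
    have "\<chi> ` S \<subseteq> KK" using chiK' SE by blast
    moreover have "card (\<chi> ` S) = card KK"
      using card_image[OF injS] \<open>card S = card (UU r)\<close> cardKK by simp
    ultimately have chiS: "\<chi> ` S = KK" using finKK card_subset_eq by blast
    show "\<forall>u\<in>UU (r + 1). u \<noteq> \<psi> e \<longrightarrow> u \<in> \<psi> ` ground M \<or> xr u (\<psi> e) \<in> \<psi> ` ground M"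
    proof (intro ballI impI)
      fix u assume u: "u \<in> UU (r + 1)" "u \<noteq> \<psi> e"
      have "proj p j u \<in> \<chi> ` S" using chiK[OF u(1)] u(2) chiS unfolding p_def by blast
      then obtain s where s: "s \<in> S" "proj p j (\<psi> s) = proj p j u" unfolding \<chi>_def by blast
      then have "u = \<psi> s \<or> u = xr (\<psi> s) p" using chieq by blast
      then have "\<psi> s = u \<or> \<psi> s = xr u p" by (auto simp: xr_def)
      moreover have "s \<in> ground M" using s SE unfolding E_def by blast
      ultimately show "u \<in> \<psi> ` ground M \<or> xr u (\<psi> e) \<in> \<psi> ` ground M"
        unfolding p_def by (metis imageI)
    qed
  next
    assume LC: "\<forall>u\<in>UU (r + 1). u \<noteq> \<psi> e \<longrightarrow> u \<in> \<psi> ` ground M \<or> xr u (\<psi> e) \<in> \<psi> ` ground M"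
    have pre: "\<And>w. w \<in> KK \<Longrightarrow> \<exists>x. x \<in> E - {e} \<and> \<chi> x = w"
    proof -
      fix w assume w: "w \<in> KK"
      have jw: "j \<notin> w" using w unfolding KK_def by blast
      have wU: "w \<in> UU (r + 1)" using w unfolding KK_def UU_def by blast
      have wp: "w \<noteq> p" using jw jp by blast
      have wne: "w \<noteq> {}" using w unfolding KK_def by blast
      have "w \<in> \<psi> ` E \<or> xr w p \<in> \<psi> ` E" using LC wU wp unfolding p_def E_def by blast
      then show "\<exists>x. x \<in> E - {e} \<and> \<chi> x = w"
      proof
        assume "w \<in> \<psi> ` E"
        then obtain x where x: "x \<in> E" "\<psi> x = w" by blast
        have "x \<noteq> e" using x wp unfolding p_def by blast
        moreover have "\<chi> x = w" unfolding \<chi>_def x(2) proj_def using jw by simp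
        ultimately show ?thesis using x by blast
      next
        assume "xr w p \<in> \<psi> ` E"
        then obtain x where x: "x \<in> E" "\<psi> x = xr w p" by blast
        have "xr w p \<noteq> p" using wne by (auto simp: xr_def)
        then have "x \<noteq> e" using x unfolding p_def by blast
        moreover have "j \<in> xr w p" using jw jp by (simp add: xr_def)
        then have "\<chi> x = w" unfolding \<chi>_def x(2) proj_def by simp
        ultimately show ?thesis using x by blast
      qed
    qed
    define sel where "sel = (\<lambda>w. SOME x. x \<in> E - {e} \<and> \<chi> x = w)"
    have selp: "\<And>w. w \<in> KK \<Longrightarrow> sel w \<in> E - {e} \<and> \<chi> (sel w) = w"
      unfolding sel_def using pre by (rule someI_ex)
    define S where "S = sel ` KK"
    have SE: "S \<subseteq> E - {e}" unfolding S_def using selp by blast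
    have chiS: "\<chi> ` S = KK"
    proof
      show "\<chi> ` S \<subseteq> KK" unfolding S_def using selp by auto
      show "KK \<subseteq> \<chi> ` S"
      proof
        fix w assume "w \<in> KK"
        then have "\<chi> (sel w) = w" "sel w \<in> S" using selp unfolding S_def by auto
        then show "w \<in> \<chi> ` S" by (metis imageI)
      qed
    qed
    have injS: "inj_on \<chi> S"
    proof (rule inj_onI)
      fix s s' assume ss: "s \<in> S" "s' \<in> S" "\<chi> s = \<chi> s'"
      obtain w where w: "w \<in> KK" "s = sel w" using ss(1) unfolding S_def by blast
      obtain w' where w': "w' \<in> KK" "s' = sel w'" using ss(2) unfolding S_def by blast
      have "w = w'" using selp[OF w(1)] selp[OF w'(1)] ss(3) w(2) w'(2) by simp
      then show "s = s'" using w(2) w'(2) by simp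
    qed
    have isS: "is_simplification N S"
      unfolding is_simplification_def gN
    proof (intro conjI ballI impI)
      show "S \<subseteq> E - {e}" by (rule SE)
      fix s assume "s \<in> S" then show "\<not> loop N s" using noloop SE by blast
    next
      fix x assume x: "x \<in> E - {e}"
      have cx: "\<chi> x \<in> KK" using chiK'[OF x] .
      then obtain s where s: "s \<in> S" "\<chi> s = \<chi> x" using chiS by (metis imageE)
      show "\<exists>!s. s \<in> S \<and> (s = x \<or> parallel N s x)"
      proof (rule ex1I[of _ s])
        show "s \<in> S \<and> (s = x \<or> parallel N s x)" using s par[of s x] x SE by blast
      next
        fix s' assume s': "s' \<in> S \<and> (s' = x \<or> parallel N s' x)"
        then have "\<chi> s' = \<chi> x" using par[of s' x] x SE by blast
        then show "s' = s" using injS s s' unfolding inj_on_def by metis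
      qed
    qed
    have gR: "ground (restrict N S) = S" using SE gN by auto
    have bchi: "bij_betw \<chi> S KK" unfolding bij_betw_def using injS chiS by blast
    have bk: "bij_betw \<kappa> S (UU r)"
    proof -
      have "bij_betw (\<tau> \<circ> \<chi>) S (UU r)" by (rule bij_betw_trans[OF bchi tau_bij])
      then show ?thesis unfolding \<kappa>_def comp_def .
    qed
    have "iso (restrict N S) (PG_rank r)"
      unfolding iso_def gR PG_ground
    proof (intro exI conjI allI impI)
      show "bij_betw \<kappa> S (UU r)" by (rule bk)
      fix X assume X: "X \<subseteq> S"
      have kX: "\<kappa> ` X \<subseteq> UU r" using bk X unfolding bij_betw_def by blast
      have injX: "inj_on \<kappa> X" using bk X unfolding bij_betw_def using inj_on_subset by blast
      have "indep (restrict N S) X \<longleftrightarrow> gf2_indep \<kappa> X" using X SE iN3 by auto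
      also have "\<dots> \<longleftrightarrow> gf2_indep id (\<kappa> ` X)" using gf2_indep_image[of \<kappa> X] injX by blast
      also have "\<dots> \<longleftrightarrow> indep (PG_rank r) (\<kappa> ` X)" using kX by (simp add: PG_indep)
      finally show "indep (restrict N S) X \<longleftrightarrow> indep (PG_rank r) (\<kappa> ` X)" .
    qed
    then show "\<exists>S. is_simplification (contract M e) S \<and> iso (restrict (contract M e) S) (PG_rank r)"
      using isS unfolding N_def by blast
  qed
qed

theorem lemma3p2:
  fixes M :: "'a matroid" and r :: nat
  assumes "matroid M" and "simple M" and "binary M" and "rank M = r + 1"
  shows "(\<forall>e\<in>ground M. \<exists>S. is_simplification (contract M e) S \<and>
            iso (restrict (contract M e) S) (PG_rank r))
         \<longleftrightarrow>
         (\<exists>i\<in>{0..r}. \<exists>F. flat (PG_rank (r + 1)) F \<and> rk (PG_rank (r + 1)) F = r - i \<and>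
            iso M (delete (PG_rank (r + 1)) F))"
proof
  assume LHS: "\<forall>e\<in>ground M. \<exists>S. is_simplification (contract M e) S \<and>
            iso (restrict (contract M e) S) (PG_rank r)"
  obtain \<psi> where inj: "inj_on \<psi> (ground M)" and U: "\<psi> ` ground M \<subseteq> UU (r + 1)"
    and eqv: "\<forall>X. X \<subseteq> ground M \<longrightarrow> (indep M X \<longleftrightarrow> gf2_indep id (\<psi> ` X))"
    using rep_exists[OF assms] by blast
  define P where "P = \<psi> ` ground M"
  have LC: "\<And>e u. e \<in> ground M \<Longrightarrow> u \<in> UU (r + 1) \<Longrightarrow> u \<noteq> \<psi> e \<Longrightarrow> u \<in> P \<or> xr u (\<psi> e) \<in> P"
  proof -
    fix e u assume e: "e \<in> ground M" and u: "u \<in> UU (r + 1)" "u \<noteq> \<psi> e"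
    have ex: "\<exists>S. is_simplification (contract M e) S \<and> iso (restrict (contract M e) S) (PG_rank r)"
      using LHS e by blast
    have "\<forall>u\<in>UU (r + 1). u \<noteq> \<psi> e \<longrightarrow> u \<in> \<psi> ` ground M \<or> xr u (\<psi> e) \<in> \<psi> ` ground M"
      by (rule contract_iff[OF inj U eqv e, THEN iffD1, OF ex])
    then show "u \<in> P \<or> xr u (\<psi> e) \<in> P" using u unfolding P_def by blast
  qed
  define C where "C = UU (r + 1) - P"
  have CU: "C \<subseteq> UU (r + 1)" unfolding C_def by blast
  have cl: "\<forall>a\<in>C. \<forall>b\<in>C. a \<noteq> b \<longrightarrow> xr a b \<in> C"
  proof (intro ballI impI)
    fix a b assume a: "a \<in> C" and b: "b \<in> C" and ab: "a \<noteq> b"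
    have aU: "a \<in> UU (r + 1)" and bU: "b \<in> UU (r + 1)" using a b unfolding C_def by auto
    have cU: "xr a b \<in> UU (r + 1)" using aU bU ab unfolding UU_def by (auto simp: xr_def)
    show "xr a b \<in> C"
    proof (rule ccontr)
      assume "xr a b \<notin> C"
      then have "xr a b \<in> P" using cU unfolding C_def by blast
      then obtain e where e: "e \<in> ground M" "\<psi> e = xr a b" unfolding P_def by blast
      have bne: "b \<noteq> {}" using bU unfolding UU_def by blast
      have "a \<noteq> xr a b" using bne by (auto simp: xr_def)
      then have "a \<in> P \<or> xr a (\<psi> e) \<in> P" using LC[OF e(1) aU] e(2) by simp
      moreover have "a \<notin> P" using a unfolding C_def by blast
      moreover have "xr a (\<psi> e) = b" using e(2) by simp
      ultimately show False using b unfolding C_def by blast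
    qed
  qed
  have fE: "finite (ground M)" and i0: "indep M {}" using assms(1) unfolding matroid_def by auto
  obtain Y where "Y \<subseteq> ground M" "indep M Y" "card Y = rk M (ground M)"
    using rk_obtain[OF fE i0] by blast
  then have "Y \<noteq> {}" using assms(4) unfolding rank_def by auto
  then obtain e0 where e0: "e0 \<in> ground M" using \<open>Y \<subseteq> ground M\<close> by blast
  have x0: "\<psi> e0 \<in> UU (r + 1)" "\<psi> e0 \<notin> C" using U e0 unfolding C_def P_def by auto
  have flat: "flat (PG_rank (r + 1)) C" by (rule closed_flat[OF CU cl])
  have rkC: "rk (PG_rank (r + 1)) C < r + 1" by (rule closed_rk[OF CU cl x0])
  define i where "i = r - rk (PG_rank (r + 1)) C"
  have iR: "i \<in> {0..r}" unfolding i_def by simp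
  have rkeq: "rk (PG_rank (r + 1)) C = r - i" unfolding i_def using rkC by simp
  have PU: "P \<subseteq> UU (r + 1)" using U unfolding P_def .
  have gD: "ground (delete (PG_rank (r + 1)) C) = P"
    unfolding delete_def ground_restrict PG_ground C_def using PU by blast
  have iD: "\<And>Z. indep (delete (PG_rank (r + 1)) C) Z \<longleftrightarrow> Z \<subseteq> P \<and> gf2_indep id Z"
    unfolding delete_def indep_restrict PG_ground PG_indep C_def using PU by blast
  have "iso M (delete (PG_rank (r + 1)) C)"
    unfolding iso_def gD
  proof (intro exI conjI allI impI)
    show "bij_betw \<psi> (ground M) P" unfolding bij_betw_def P_def using inj by blast
    fix X assume X: "X \<subseteq> ground M"
    have "\<psi> ` X \<subseteq> P" using X unfolding P_def by blast
    then have "indep (delete (PG_rank (r + 1)) C) (\<psi> ` X) \<longleftrightarrow> gf2_indep id (\<psi> ` X)"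
      using iD by blast
    moreover have "indep M X \<longleftrightarrow> gf2_indep id (\<psi> ` X)" using eqv X by blast
    ultimately show "indep M X \<longleftrightarrow> indep (delete (PG_rank (r + 1)) C) (\<psi> ` X)" by blast
  qed
  then show "\<exists>i\<in>{0..r}. \<exists>F. flat (PG_rank (r + 1)) F \<and> rk (PG_rank (r + 1)) F = r - i \<and>
            iso M (delete (PG_rank (r + 1)) F)"
    using iR flat rkeq by blast
next
  assume "\<exists>i\<in>{0..r}. \<exists>F. flat (PG_rank (r + 1)) F \<and> rk (PG_rank (r + 1)) F = r - i \<and>
            iso M (delete (PG_rank (r + 1)) F)"
  then obtain F where F: "flat (PG_rank (r + 1)) F" and iso: "iso M (delete (PG_rank (r + 1)) F)"
    by blast
  define P where "P = UU (r + 1) - F"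
  have gD: "ground (delete (PG_rank (r + 1)) F) = P"
    unfolding delete_def ground_restrict PG_ground P_def by blast
  have iD: "\<And>Z. indep (delete (PG_rank (r + 1)) F) Z \<longleftrightarrow> Z \<subseteq> P \<and> gf2_indep id Z"
    unfolding delete_def indep_restrict PG_ground PG_indep P_def by blast
  obtain h where h: "bij_betw h (ground M) P"
    and hi: "\<forall>X. X \<subseteq> ground M \<longrightarrow> (indep M X \<longleftrightarrow> indep (delete (PG_rank (r + 1)) F) (h ` X))"
    using iso unfolding iso_def gD by blast
  have inj: "inj_on h (ground M)" and hE: "h ` ground M = P" using h unfolding bij_betw_def by auto
  have U: "h ` ground M \<subseteq> UU (r + 1)" using hE unfolding P_def by blast
  have eqv: "\<forall>X. X \<subseteq> ground M \<longrightarrow> (indep M X \<longleftrightarrow> gf2_indep id (h ` X))"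
  proof (intro allI impI)
    fix X assume X: "X \<subseteq> ground M"
    have "h ` X \<subseteq> P" using X hE by blast
    then have "indep (delete (PG_rank (r + 1)) F) (h ` X) \<longleftrightarrow> gf2_indep id (h ` X)"
      using iD by blast
    moreover have "indep M X \<longleftrightarrow> indep (delete (PG_rank (r + 1)) F) (h ` X)" using hi X by blast
    ultimately show "indep M X \<longleftrightarrow> gf2_indep id (h ` X)" by blast
  qed
  show "\<forall>e\<in>ground M. \<exists>S. is_simplification (contract M e) S \<and>
            iso (restrict (contract M e) S) (PG_rank r)"
  proof
    fix e assume e: "e \<in> ground M"
    have "\<forall>u\<in>UU (r + 1). u \<noteq> h e \<longrightarrow> u \<in> h ` ground M \<or> xr u (h e) \<in> h ` ground M"
    proof (intro ballI impI)
      fix u assume u: "u \<in> UU (r + 1)" "u \<noteq> h e"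
      have pP: "h e \<in> P" using e hE by blast
      then have pne: "h e \<noteq> {}" and pF: "h e \<notin> F" unfolding P_def UU_def by auto
      show "u \<in> h ` ground M \<or> xr u (h e) \<in> h ` ground M"
      proof (rule ccontr)
        assume "\<not> (u \<in> h ` ground M \<or> xr u (h e) \<in> h ` ground M)"
        then have n1: "u \<notin> P" and n2: "xr u (h e) \<notin> P" unfolding hE by auto
        have uF: "u \<in> F" using n1 u(1) unfolding P_def by blast
        have "xr u (h e) \<in> UU (r + 1)" using u pP unfolding UU_def P_def by (auto simp: xr_def)
        then have vF: "xr u (h e) \<in> F" using n2 unfolding P_def by blast
        have "u \<noteq> xr u (h e)" using pne by (auto simp: xr_def)
        then have "xr u (xr u (h e)) \<in> F" by (rule flat_closed[OF F uF vF])
        then show False using pF by simp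
      qed
    qed
    then show "\<exists>S. is_simplification (contract M e) S \<and> iso (restrict (contract M e) S) (PG_rank r)"
      by (rule contract_iff[OF inj U eqv e, THEN iffD2])
  qed
qed

end
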